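(* Let $R \in \mathcal{R}$. Then there exists a nice set $X$ such that $R = X \to \mathcal{N}$, where $X \to \mathcal{N} = \{t \in \mathcal{T} : (t\;\bar{w}) \in \mathcal{N} \text{ for each } \bar{w} \in X\}$.
   Context: With disjoint sets of $\lambda$-variables $x,y,\dots$ and $\mu$-variables $a,b,\dots$, terms and $\mathcal{E}$-terms are $\mathcal{T} ::= x \mid \lambda x.\mathcal{T} \mid (\mathcal{T}\;\mathcal{E}) \mid \langle \mathcal{T},\mathcal{T}\rangle \mid \omega_1\mathcal{T} \mid \omega_2\mathcal{T} \mid \mu a.\mathcal{T} \mid (a\;\mathcal{T})$, $\mathcal{E} ::= \mathcal{T} \mid \pi_1 \mid \pi_2 \mid [x.\mathcal{T}, y.\mathcal{T}]$ (up to renaming of bound variables). The one-step reduction $\triangleright$ is the closure under all constructors of: $(\lambda x.u\;v)\triangleright u[x:=v]$; $(\langle t_1,t_2\rangle\;\pi_i)\triangleright t_i$; $(\omega_i t\;[x_1.u_1,x_2.u_2])\triangleright u_i[x_i:=t]$; $((t\;[x_1.u_1,x_2.u_2])\;\varepsilon)\triangleright(t\;[x_1.(u_1\;\varepsilon),x_2.(u_2\;\varepsilon)])$; $(\mu a.t\;\varepsilon)\triangleright\mu a.t[a:=^*\varepsilon]$, where $t[a:=^*\varepsilon]$ replaces inductively each subterm $(a\;v)$ by $(a\;(v\;\varepsilon))$. $\mathcal{N}$ (resp. $\mathcal{N}'$) is the set of strongly normalizable terms (resp. $\mathcal{E}$-terms), and $\mathcal{N}'^{<\omega}$ the set of finite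 sequences of elements of $\mathcal{N}'$. For $\bar{w}=w_1\dots w_n$ and a term $t$, $(t\;\bar{w})$ is $t$ if $n=0$ and $((t\;w_1)\;w_2\dots w_n)$ otherwise. A sequence $\bar{w}\in\mathcal{N}'^{<\omega}$ is nice iff none of $w_1,\dots,w_{n-1}$ is of the form $[x.u,y.v]$; a set $X\subseteq\mathcal{N}'^{<\omega}$ is nice iff all its elements are nice sequences. For sets $K,L$ of terms: $K\to L=\{t\in\mathcal{T} : (t\;u)\in L \text{ for all } u\in K\}$; $K\wedge L=\{t : (t\;\pi_1)\in K, (t\;\pi_2)\in L\}$; $K\vee L=\{t :$ for all $\lambda$-variables $x,y$ and all $u,v\in\mathcal{N}$, if $u[x:=r]\in\mathcal{N}$ and $v[y:=s]\in\mathcal{N}$ for all $r\in K,s\in L$, then $(t\;[x.u,y.v])\in\mathcal{N}\}$. $\mathcal{R}$ is the smallest set of sets of terms containing $\mathcal{N}$ and closed under $\to,\wedge,\vee$. *)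

theory Defs
  imports Main
begin

text \<open>There are two independent index spaces: lambda-variables (Var, bound by Lam and by
  the two branches of Case) and mu-variables (MApp, bound by Mu).\<close>

datatype trm =
    Var nat
  | Lam trm
  | App trm etm
  | Pair trm trm
  | Inj1 trm
  | Inj2 trm
  | Mu trm
  | MApp nat trm
and etm =
    ETrm trm
  | Proj1
  | Proj2
  | Case trm trm

primrec lift_t :: "nat \<Rightarrow> trm \<Rightarrow> trm" and lift_e :: "nat \<Rightarrow> etm \<Rightarrow> etm" where
  "lift_t k (Var n) = Var (if n < k then n else Suc n)"
| "lift_t k (Lam t) = Lam (lift_t (Suc k) t)"
| "lift_t k (App t e) = App (lift_t k t) (lift_e k e)"
| "lift_t k (Pair t u) = Pair (lift_t k t) (lift_t k u)"
| "lift_t k (Inj1 t) = Inj1 (lift_t k t)"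
| "lift_t k (Inj2 t) = Inj2 (lift_t k t)"
| "lift_t k (Mu t) = Mu (lift_t k t)"
| "lift_t k (MApp a t) = MApp a (lift_t k t)"
| "lift_e k (ETrm t) = ETrm (lift_t k t)"
| "lift_e k Proj1 = Proj1"
| "lift_e k Proj2 = Proj2"
| "lift_e k (Case u v) = Case (lift_t (Suc k) u) (lift_t (Suc k) v)"

primrec mlift_t :: "nat \<Rightarrow> trm \<Rightarrow> trm" and mlift_e :: "nat \<Rightarrow> etm \<Rightarrow> etm" where
  "mlift_t k (Var n) = Var n"
| "mlift_t k (Lam t) = Lam (mlift_t k t)"
| "mlift_t k (App t e) = App (mlift_t k t) (mlift_e k e)"
| "mlift_t k (Pair t u) = Pair (mlift_t k t) (mlift_t k u)"
| "mlift_t k (Inj1 t) = Inj1 (mlift_t k t)"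
| "mlift_t k (Inj2 t) = Inj2 (mlift_t k t)"
| "mlift_t k (Mu t) = Mu (mlift_t (Suc k) t)"
| "mlift_t k (MApp a t) = MApp (if a < k then a else Suc a) (mlift_t k t)"
| "mlift_e k (ETrm t) = ETrm (mlift_t k t)"
| "mlift_e k Proj1 = Proj1"
| "mlift_e k Proj2 = Proj2"
| "mlift_e k (Case u v) = Case (mlift_t k u) (mlift_t k v)"

primrec subst_t :: "trm \<Rightarrow> nat \<Rightarrow> trm \<Rightarrow> trm" and subst_e :: "etm \<Rightarrow> nat \<Rightarrow> trm \<Rightarrow> etm" where
  "subst_t (Var n) k s = (if n < k then Var n else if n = k then s else Var (n - 1))"
| "subst_t (Lam t) k s = Lam (subst_t t (Suc k) (lift_t 0 s))"
| "subst_t (App t e) k s = App (subst_t t k s) (subst_e e k s)"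
| "subst_t (Pair t u) k s = Pair (subst_t t k s) (subst_t u k s)"
| "subst_t (Inj1 t) k s = Inj1 (subst_t t k s)"
| "subst_t (Inj2 t) k s = Inj2 (subst_t t k s)"
| "subst_t (Mu t) k s = Mu (subst_t t k (mlift_t 0 s))"
| "subst_t (MApp a t) k s = MApp a (subst_t t k s)"
| "subst_e (ETrm t) k s = ETrm (subst_t t k s)"
| "subst_e Proj1 k s = Proj1"
| "subst_e Proj2 k s = Proj2"
| "subst_e (Case u v) k s = Case (subst_t u (Suc k) (lift_t 0 s)) (subst_t v (Suc k) (lift_t 0 s))"

primrec msubst_t :: "trm \<Rightarrow> nat \<Rightarrow> etm \<Rightarrow> trm" and msubst_e :: "etm \<Rightarrow> nat \<Rightarrow> etm \<Rightarrow> etm" where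
  "msubst_t (Var n) a e = Var n"
| "msubst_t (Lam t) a e = Lam (msubst_t t a (lift_e 0 e))"
| "msubst_t (App t f) a e = App (msubst_t t a e) (msubst_e f a e)"
| "msubst_t (Pair t u) a e = Pair (msubst_t t a e) (msubst_t u a e)"
| "msubst_t (Inj1 t) a e = Inj1 (msubst_t t a e)"
| "msubst_t (Inj2 t) a e = Inj2 (msubst_t t a e)"
| "msubst_t (Mu t) a e = Mu (msubst_t t (Suc a) (mlift_e 0 e))"
| "msubst_t (MApp b t) a e =
     (if b = a then MApp b (App (msubst_t t a e) e) else MApp b (msubst_t t a e))"
| "msubst_e (ETrm t) a e = ETrm (msubst_t t a e)"
| "msubst_e Proj1 a e = Proj1"
| "msubst_e Proj2 a e = Proj2"
| "msubst_e (Case u v) a e = Case (msubst_t u a (lift_e 0 e)) (msubst_t v a (lift_e 0 e))"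

inductive red :: "trm \<Rightarrow> trm \<Rightarrow> bool" and red_e :: "etm \<Rightarrow> etm \<Rightarrow> bool" where
  beta: "red (App (Lam u) (ETrm v)) (subst_t u 0 v)"
| proj1: "red (App (Pair t1 t2) Proj1) t1"
| proj2: "red (App (Pair t1 t2) Proj2) t2"
| case1: "red (App (Inj1 t) (Case u1 u2)) (subst_t u1 0 t)"
| case2: "red (App (Inj2 t) (Case u1 u2)) (subst_t u2 0 t)"
| comm: "red (App (App t (Case u1 u2)) e)
             (App t (Case (App u1 (lift_e 0 e)) (App u2 (lift_e 0 e))))"
| mu: "red (App (Mu t) e) (Mu (msubst_t t 0 (mlift_e 0 e)))"
| c_lam: "red t t' \<Longrightarrow> red (Lam t) (Lam t')"
| c_app1: "red t t' \<Longrightarrow> red (App t e) (App t' e)"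
| c_app2: "red_e e e' \<Longrightarrow> red (App t e) (App t e')"
| c_pair1: "red t t' \<Longrightarrow> red (Pair t u) (Pair t' u)"
| c_pair2: "red u u' \<Longrightarrow> red (Pair t u) (Pair t u')"
| c_inj1: "red t t' \<Longrightarrow> red (Inj1 t) (Inj1 t')"
| c_inj2: "red t t' \<Longrightarrow> red (Inj2 t) (Inj2 t')"
| c_mu: "red t t' \<Longrightarrow> red (Mu t) (Mu t')"
| c_mapp: "red t t' \<Longrightarrow> red (MApp a t) (MApp a t')"
| c_etrm: "red t t' \<Longrightarrow> red_e (ETrm t) (ETrm t')"
| c_case1: "red u u' \<Longrightarrow> red_e (Case u v) (Case u' v)"
| c_case2: "red v v' \<Longrightarrow> red_e (Case u v) (Case u v')"

definition SN :: "trm set" where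
  "SN = {t. Wellfounded.accp (\<lambda>y x. red x y) t}"

definition SN_e :: "etm set" where
  "SN_e = {e. Wellfounded.accp (\<lambda>y x. red_e x y) e}"

definition app_seq :: "trm \<Rightarrow> etm list \<Rightarrow> trm" where
  "app_seq t ws = foldl App t ws"

fun is_case :: "etm \<Rightarrow> bool" where
  "is_case (Case u v) = True"
| "is_case _ = False"

definition nice_seq :: "etm list \<Rightarrow> bool" where
  "nice_seq ws \<longleftrightarrow> (\<forall>i. i + 1 < length ws \<longrightarrow> \<not> is_case (ws ! i))"

definition nice_set :: "etm list set \<Rightarrow> bool" where
  "nice_set X \<longleftrightarrow> X \<subseteq> lists SN_e \<and> (\<forall>ws\<in>X. nice_seq ws)"

definition seq_arrow :: "etm list set \<Rightarrow> trm set" where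
  "seq_arrow X = {t. \<forall>ws\<in>X. app_seq t ws \<in> SN}"

definition arrow :: "trm set \<Rightarrow> trm set \<Rightarrow> trm set" where
  "arrow K L = {t. \<forall>u\<in>K. App t (ETrm u) \<in> L}"

definition conj_set :: "trm set \<Rightarrow> trm set \<Rightarrow> trm set" where
  "conj_set K L = {t. App t Proj1 \<in> K \<and> App t Proj2 \<in> L}"

text \<open>K \<or> L; the bound variables x, y of [x.u, y.v] are de Bruijn index 0 in u and v.\<close>
definition disj_set :: "trm set \<Rightarrow> trm set \<Rightarrow> trm set" where
  "disj_set K L = {t. \<forall>u v. u \<in> SN \<and> v \<in> SN \<and>
      (\<forall>r\<in>K. subst_t u 0 r \<in> SN) \<and> (\<forall>s\<in>L. subst_t v 0 s \<in> SN)
      \<longrightarrow> App t (Case u v) \<in> SN}"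

inductive_set RR :: "trm set set" where
  "SN \<in> RR"
| "K \<in> RR \<Longrightarrow> L \<in> RR \<Longrightarrow> arrow K L \<in> RR"
| "K \<in> RR \<Longrightarrow> L \<in> RR \<Longrightarrow> conj_set K L \<in> RR"
| "K \<in> RR \<Longrightarrow> L \<in> RR \<Longrightarrow> disj_set K L \<in> RR"

end

theory Submission
  imports Defs
begin

lemma accp_map:
  assumes "Wellfounded.accp r (f a)" and "\<And>p q. r' q p \<Longrightarrow> r (f q) (f p)"
  shows "Wellfounded.accp r' a"
proof -
  have "\<And>b. z = f b \<Longrightarrow> Wellfounded.accp r' b" if "Wellfounded.accp r z" for z
    using that
  proof (induction z rule: Wellfounded.accp.induct)
    case (accI z)
    show ?case
    proof (rule Wellfounded.accp.intros)
      fix y assume "r' y b"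
      then have "r (f y) z" using accI.prems assms(2) by simp
      then show "Wellfounded.accp r' y" using accI.IH by blast
    qed
  qed
  then show ?thesis using assms(1) by blast
qed

lemma SN_App: "App t e \<in> SN \<Longrightarrow> t \<in> SN"
  unfolding SN_def
  apply simp
  apply (erule accp_map[where f="\<lambda>t. App t e"])
  apply (erule red_red_e.c_app1)
  done

lemma app_seq_Cons: "app_seq t (e # ws) = app_seq (App t e) ws"
  by (simp add: app_seq_def)

lemma app_seq_snoc: "app_seq t (ws @ [e]) = App (app_seq t ws) e"
  by (simp add: app_seq_def)

lemma app_seq_SN: "app_seq t ws \<in> SN \<Longrightarrow> t \<in> SN"
proof (induction ws arbitrary: t)
  case Nil then show ?case by (simp add: app_seq_def)
next
  case (Cons e ws) then show ?case by (simp add: app_seq_Cons) (metis SN_App)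
qed

lemma ETrm_SN: "u \<in> SN \<Longrightarrow> ETrm u \<in> SN_e"
  unfolding SN_def SN_e_def
proof (simp, induction u rule: Wellfounded.accp.induct)
  case (accI u)
  show ?case
  proof (rule Wellfounded.accp.intros)
    fix e' assume "red_e (ETrm u) e'"
    then obtain u' where "e' = ETrm u'" "red u u'"
      by (cases rule: red_e.cases) auto
    then show "Wellfounded.accp (\<lambda>y x. red_e x y) e'" using accI.IH by blast
  qed
qed

lemma Proj1_SN: "Proj1 \<in> SN_e"
  unfolding SN_e_def apply simp apply (rule Wellfounded.accp.intros) by (erule red_e.cases) simp_all

lemma Proj2_SN: "Proj2 \<in> SN_e"
  unfolding SN_e_def apply simp apply (rule Wellfounded.accp.intros) by (erule red_e.cases) simp_all

lemma Case_SN: "u \<in> SN \<Longrightarrow> v \<in> SN \<Longrightarrow> Case u v \<in> SN_e"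
  unfolding SN_def SN_e_def
proof (simp, induction u arbitrary: v rule: Wellfounded.accp.induct)
  case (accI u)
  note IH1 = accI.IH and P1 = accI.prems
  from accI.prems show ?case
  proof (induction v rule: Wellfounded.accp.induct)
    case (accI v)
    show ?case
    proof (rule Wellfounded.accp.intros)
      fix e' assume "red_e (Case u v) e'"
      then show "Wellfounded.accp (\<lambda>y x. red_e x y) e'"
      proof (cases rule: red_e.cases)
        case (c_case1 u')
        then show ?thesis using IH1[of u' v] Wellfounded.accp.intros[of "\<lambda>y x. red x y" v, OF accI.hyps] by blast
      next
        case (c_case2 v')
        then show ?thesis using accI.IH by blast
      qed
    qed
  qed
qed

inductive NE :: "trm \<Rightarrow> bool" where
  "NE (Var n)"
| "NE t \<Longrightarrow> \<not> is_case e \<Longrightarrow> NE (App t e)"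

lemma red_e_case: "red_e e e' \<Longrightarrow> is_case e' = is_case e"
  by (cases rule: red_e.cases) auto

lemma NE_red: "NE t \<Longrightarrow> red t t' \<Longrightarrow> NE t'"
proof (induction t arbitrary: t' rule: NE.induct)
  case (1 n)
  then show ?case by (auto elim: red.cases)
next
  case (2 t e)
  from 2(4) show ?case
  proof (cases rule: red.cases)
    case (c_app1 t'')
    then show ?thesis using 2 by (auto intro: NE.intros)
  next
    case (c_app2 e')
    then show ?thesis using 2 red_e_case by (auto intro: NE.intros)
  qed (use 2 in \<open>auto elim: NE.cases\<close>)
qed

lemma Var_SN: "Var n \<in> SN"
  unfolding SN_def apply simp apply (rule Wellfounded.accp.intros) by (erule red.cases) simp_all

lemma NE_App_SN: "t \<in> SN \<Longrightarrow> e \<in> SN_e \<Longrightarrow> NE t \<Longrightarrow> App t e \<in> SN"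
  unfolding SN_def SN_e_def
proof (simp, induction t arbitrary: e rule: Wellfounded.accp.induct)
  case (accI t)
  note IH1 = accI.IH and P1 = accI.prems
  from accI.prems(1) show ?case
  proof (induction e rule: Wellfounded.accp.induct)
    case (accI e)
    show ?case
    proof (rule Wellfounded.accp.intros)
      fix s assume "red (App t e) s"
      then show "Wellfounded.accp (\<lambda>y x. red x y) s"
      proof (cases rule: red.cases)
        case (c_app1 t')
        then show ?thesis using IH1[of t' e] Wellfounded.accp.intros[of "\<lambda>y x. red_e x y" e, OF accI.hyps]
            NE_red[OF P1(2)] by blast
      next
        case (c_app2 e')
        then show ?thesis using accI.IH by blast
      qed (use P1(2) in \<open>auto elim: NE.cases\<close>)
    qed
  qed
qed

lemma Var_seq_SN:
  "nice_seq ws \<Longrightarrow> ws \<in> lists SN_e \<Longrightarrow> app_seq (Var n) ws \<in> SN"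
proof (induction ws rule: rev_induct)
  case Nil
  then show ?case by (simp add: app_seq_def Var_SN)
next
  case (snoc e ws)
  have nws: "\<forall>x\<in>set ws. \<not> is_case x"
    using snoc.prems(1) unfolding nice_seq_def
    by (auto simp: in_set_conv_nth nth_append)
  have ne: "NE (app_seq (Var n) ws)"
    using nws by (induction ws rule: rev_induct) (auto simp: app_seq_snoc intro: NE.intros simp: app_seq_def)
  have "nice_seq ws" using nws unfolding nice_seq_def by simp
  then have "app_seq (Var n) ws \<in> SN" using snoc by simp
  then show ?case using ne snoc.prems(2) NE_App_SN by (simp add: app_seq_snoc)
qed

lemma Var_in: "nice_set X \<Longrightarrow> Var n \<in> seq_arrow X"
  unfolding nice_set_def seq_arrow_def using Var_seq_SN by blast

lemma sub_SN: "X \<noteq> {} \<Longrightarrow> seq_arrow X \<subseteq> SN"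
  unfolding seq_arrow_def using app_seq_SN by blast

lemma nice_cons: "nice_seq ws \<Longrightarrow> \<not> is_case e \<Longrightarrow> nice_seq (e#ws)"
  unfolding nice_seq_def
proof (intro allI impI)
  fix i assume "\<forall>i. i + 1 < length ws \<longrightarrow> \<not> is_case (ws ! i)" "\<not> is_case e" "i + 1 < length (e # ws)"
  then show "\<not> is_case ((e # ws) ! i)" by (cases i) auto
qed

lemma main: "R \<in> RR \<Longrightarrow> \<exists>X. nice_set X \<and> X \<noteq> {} \<and> R = seq_arrow X"
proof (induction rule: RR.induct)
  case 1
  show ?case
    by (rule exI[of _ "{[]}"]) (auto simp: nice_set_def nice_seq_def seq_arrow_def app_seq_def)
next
  case (2 K L)
  then obtain Y XL where Y: "nice_set Y" "Y \<noteq> {}" "K = seq_arrow Y"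
    and XL: "nice_set XL" "XL \<noteq> {}" "L = seq_arrow XL" by blast
  have KSN: "K \<subseteq> SN" using Y sub_SN by blast
  let ?X = "{ETrm u # ws | u ws. u \<in> K \<and> ws \<in> XL}"
  have "nice_set ?X"
    using XL(1) KSN ETrm_SN nice_cons unfolding nice_set_def by fastforce
  moreover have "?X \<noteq> {}" using Var_in[OF Y(1)] Y(3) XL(2) by blast
  moreover have "arrow K L = seq_arrow ?X"
    unfolding arrow_def XL(3) seq_arrow_def by (auto simp: app_seq_Cons) (metis app_seq_Cons)
  ultimately show ?case by blast
next
  case (3 K L)
  then obtain XK XL where XK: "nice_set XK" "XK \<noteq> {}" "K = seq_arrow XK"
    and XL: "nice_set XL" "XL \<noteq> {}" "L = seq_arrow XL" by blast
  let ?X = "{Proj1 # ws | ws. ws \<in> XK} \<union> {Proj2 # ws | ws. ws \<in> XL}"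
  have "nice_set ?X"
    using XL(1) XK(1) Proj1_SN Proj2_SN nice_cons unfolding nice_set_def by fastforce
  moreover have "?X \<noteq> {}" using XK(2) by blast
  moreover have "conj_set K L = seq_arrow ?X"
  proof (intro set_eqI iffI)
    fix t assume "t \<in> conj_set K L"
    then show "t \<in> seq_arrow ?X"
      unfolding conj_set_def XL(3) XK(3) seq_arrow_def by (auto simp: app_seq_Cons)
  next
    fix t assume A: "t \<in> seq_arrow ?X"
    have "\<forall>ws\<in>XK. app_seq (App t Proj1) ws \<in> SN"
    proof
      fix ws assume "ws \<in> XK"
      then have "Proj1 # ws \<in> ?X" by blast
      then show "app_seq (App t Proj1) ws \<in> SN" using A unfolding seq_arrow_def app_seq_Cons[symmetric] by blast
    qed
    moreover have "\<forall>ws\<in>XL. app_seq (App t Proj2) ws \<in> SN"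
    proof
      fix ws assume "ws \<in> XL"
      then have "Proj2 # ws \<in> ?X" by blast
      then show "app_seq (App t Proj2) ws \<in> SN" using A unfolding seq_arrow_def app_seq_Cons[symmetric] by blast
    qed
    ultimately show "t \<in> conj_set K L" unfolding conj_set_def XL(3) XK(3) seq_arrow_def by blast
  qed
  ultimately show ?case by blast
next
  case (4 K L)
  then obtain XK XL where XK: "nice_set XK" "XK \<noteq> {}" "K = seq_arrow XK"
    and XL: "nice_set XL" "XL \<noteq> {}" "L = seq_arrow XL" by blast
  have KSN: "K \<subseteq> SN" using XK sub_SN by blast
  have LSN: "L \<subseteq> SN" using XL sub_SN by blast
  let ?X = "{[Case u v] | u v. u \<in> SN \<and> v \<in> SN \<and>
      (\<forall>r\<in>K. subst_t u 0 r \<in> SN) \<and> (\<forall>s\<in>L. subst_t v 0 s \<in> SN)}"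
  have "nice_set ?X"
    using Case_SN unfolding nice_set_def nice_seq_def by auto
  moreover have "[Case (Var 0) (Var 0)] \<in> ?X" using KSN LSN Var_SN by auto
  then have "?X \<noteq> {}" by blast
  moreover have "disj_set K L = seq_arrow ?X"
  proof (intro set_eqI iffI)
    fix t assume "t \<in> disj_set K L"
    then show "t \<in> seq_arrow ?X"
      unfolding disj_set_def seq_arrow_def by (auto simp: app_seq_def)
  next
    fix t assume A: "t \<in> seq_arrow ?X"
    show "t \<in> disj_set K L" unfolding disj_set_def
    proof (intro CollectI allI impI)
      fix u v assume H: "u \<in> SN \<and> v \<in> SN \<and>
      (\<forall>r\<in>K. subst_t u 0 r \<in> SN) \<and> (\<forall>s\<in>L. subst_t v 0 s \<in> SN)"
      then have "[Case u v] \<in> ?X" by blast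
      then have "app_seq t [Case u v] \<in> SN" using A unfolding seq_arrow_def by blast
      then show "App t (Case u v) \<in> SN" by (simp add: app_seq_def)
    qed
  qed
  ultimately show ?case by blast
qed

theorem lemma6:
  assumes "R \<in> RR"
  shows "\<exists>X. nice_set X \<and> R = seq_arrow X"
  using main[OF assms] by blast

end
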